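(* Let $\mathcal R_f,\mathcal R_g$ be constructible Reeb graphs. Then $d_{FD}(\mathcal R_f,\mathcal R_g)=\infty$ if and only if $\mathcal R_f$ and $\mathcal R_g$ have different numbers of path-connected components.
   Context: Reeb graph $\mathcal R_f=(\mathbb X_f,\tilde f)$: quotient of a scalar field identifying points in the same path component of a level set; constructible = built from finitely many compact locally path-connected slices over critical values (a finite graph, possibly disconnected). $d_f(u,v)=\min_{\pi:u\to v}(\max_\pi\tilde f-\min_\pi\tilde f)$ over continuous paths, with $d_f(u,v)=\infty$ when no path exists. $d_{FD}(\mathcal R_f,\mathcal R_g)=\inf_{\Phi,\Psi}\max\{D(\Phi,\Psi),\|\tilde f-\tilde g\circ\Phi\|_\infty,\|\tilde f\circ\Psi-\tilde g\|_\infty\}$ over continuous $\Phi:\mathcal R_f\to\mathcal R_g,\Psi:\mathcal R_g\to\mathcal R_f$, where $D(\Phi,\Psi)=\sup\tfrac12|d_f(x,x')-d_g(y,y')|$ over pairs in $\{(x,\Phi(x))\}\cup\{(\Psi(y),y)\}$. *)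

theory Defs
  imports "HOL-Analysis.Analysis"
begin

text \<open>The Reeb graph space is the
geometric realization (quotient of the discrete vertex set and one copy of [0,1] per
edge), and the function is the height, interpolated linearly along edges.\<close>

record ('v, 'e) rgraph =
  verts :: "'v set"
  edges :: "'e set"
  ht    :: "'v \<Rightarrow> real"
  lo    :: "'e \<Rightarrow> 'v"
  hi    :: "'e \<Rightarrow> 'v"

definition constructible_reeb :: "('v, 'e) rgraph \<Rightarrow> bool" where
  "constructible_reeb G \<longleftrightarrow> finite (verts G) \<and> finite (edges G) \<and>
     (\<forall>e \<in> edges G. lo G e \<in> verts G \<and> hi G e \<in> verts G \<and> ht G (lo G e) < ht G (hi G e))"

definition reeb_space :: "('v, 'e) rgraph \<Rightarrow> ('v + 'e \<times> real) set" where
  "reeb_space G = Inl ` verts G \<union> Inr ` (edges G \<times> {0<..<1})"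

definition edge_map :: "('v, 'e) rgraph \<Rightarrow> 'e \<Rightarrow> real \<Rightarrow> 'v + 'e \<times> real" where
  "edge_map G e t = (if t \<le> 0 then Inl (lo G e) else if 1 \<le> t then Inl (hi G e) else Inr (e, t))"

text \<open>Quotient topology: U is open iff its preimage in every edge [0,1] is open
(the vertex set carries the discrete topology).\<close>
definition reeb_top :: "('v, 'e) rgraph \<Rightarrow> ('v + 'e \<times> real) topology" where
  "reeb_top G = topology (\<lambda>U. U \<subseteq> reeb_space G \<and>
     (\<forall>e \<in> edges G. openin (top_of_set {0..1}) {t \<in> {0..1}. edge_map G e t \<in> U}))"

definition reeb_fun :: "('v, 'e) rgraph \<Rightarrow> 'v + 'e \<times> real \<Rightarrow> real" where
  "reeb_fun G x = (case x of Inl v \<Rightarrow> ht G v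
     | Inr (e, t) \<Rightarrow> (1 - t) * ht G (lo G e) + t * ht G (hi G e))"

definition reeb_dist :: "('v, 'e) rgraph \<Rightarrow> 'v + 'e \<times> real \<Rightarrow> 'v + 'e \<times> real \<Rightarrow> ereal" where
  "reeb_dist G u v =
     (INF p \<in> {p. pathin (reeb_top G) p \<and> p 0 = u \<and> p 1 = v}.
        ereal ((SUP t \<in> {0..1}. reeb_fun G (p t)) - (INF t \<in> {0..1}. reeb_fun G (p t))))"

text \<open>Absolute difference of extended reals, with the convention |\<infinity> - \<infinity>| = 0.\<close>
definition ediff :: "ereal \<Rightarrow> ereal \<Rightarrow> ereal" where
  "ediff a b = (if a = b then 0 else \<bar>a - b\<bar>)"

definition distortion ::
  "('v, 'e) rgraph \<Rightarrow> ('w, 'd) rgraph \<Rightarrow> ('v + 'e \<times> real \<Rightarrow> 'w + 'd \<times> real)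
     \<Rightarrow> ('w + 'd \<times> real \<Rightarrow> 'v + 'e \<times> real) \<Rightarrow> ereal" where
  "distortion G H \<Phi> \<Psi> =
     (let C = {(x, \<Phi> x) | x. x \<in> topspace (reeb_top G)} \<union> {(\<Psi> y, y) | y. y \<in> topspace (reeb_top H)}
      in SUP (p, q) \<in> C \<times> C. ediff (reeb_dist G (fst p) (fst q)) (reeb_dist H (snd p) (snd q)) / 2)"

definition fd_dist :: "('v, 'e) rgraph \<Rightarrow> ('w, 'd) rgraph \<Rightarrow> ereal" where
  "fd_dist G H =
     (INF (\<Phi>, \<Psi>) \<in> {(\<Phi>, \<Psi>). continuous_map (reeb_top G) (reeb_top H) \<Phi> \<and>
                              continuous_map (reeb_top H) (reeb_top G) \<Psi>}.
        max (distortion G H \<Phi> \<Psi>)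
          (max (SUP x \<in> topspace (reeb_top G). ereal \<bar>reeb_fun G x - reeb_fun H (\<Phi> x)\<bar>)
               (SUP y \<in> topspace (reeb_top H). ereal \<bar>reeb_fun G (\<Psi> y) - reeb_fun H y\<bar>)))"

end

theory Submission
  imports Defs
begin


lemma reeb_istop: "istopology (\<lambda>U. U \<subseteq> reeb_space G \<and>
     (\<forall>e \<in> edges G. openin (top_of_set {0..1}) {t \<in> {0..1}. edge_map G e t \<in> U}))"
  (is "istopology ?L")
proof -
  have 1: "?L (S \<inter> T)" if S: "?L S" and T: "?L T" for S T
  proof -
    have "openin (top_of_set {0..1}) {t \<in> {0..1}. edge_map G e t \<in> S \<inter> T}" if "e \<in> edges G" for e
    proof -
      have "openin (top_of_set {0..1}) ({t \<in> {0..1}. edge_map G e t \<in> S} \<inter> {t \<in> {0..1}. edge_map G e t \<in> T})"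
        using S T that by (intro openin_Int) auto
      moreover have "{t \<in> {0..1}. edge_map G e t \<in> S} \<inter> {t \<in> {0..1}. edge_map G e t \<in> T} = {t \<in> {0..1}. edge_map G e t \<in> S \<inter> T}" by auto
      ultimately show ?thesis by simp
    qed
    then show ?thesis using S by auto
  qed
  have 2: "?L (\<Union>K)" if K: "\<forall>k\<in>K. ?L k" for K
  proof -
    have "openin (top_of_set {0..1}) {t \<in> {0..1}. edge_map G e t \<in> \<Union>K}" if "e \<in> edges G" for e
    proof -
      have "openin (top_of_set {0..1}) (\<Union>k\<in>K. {t \<in> {0..1}. edge_map G e t \<in> k})"
        using K that by (intro openin_Union) auto
      moreover have "(\<Union>k\<in>K. {t \<in> {0..1}. edge_map G e t \<in> k}) = {t \<in> {0..1}. edge_map G e t \<in> \<Union>K}" by auto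
      ultimately show ?thesis by simp
    qed
    then show ?thesis using K by auto
  qed
  show ?thesis unfolding istopology_def
    apply (rule conjI)
     apply (intro allI impI)
     apply (erule (1) 1)
    apply (intro allI impI)
    apply (erule 2)
    done
qed

lemma openin_reeb: "openin (reeb_top G) U \<longleftrightarrow> U \<subseteq> reeb_space G \<and>
     (\<forall>e \<in> edges G. openin (top_of_set {0..1}) {t \<in> {0..1}. edge_map G e t \<in> U})"
  unfolding reeb_top_def using reeb_istop[of G] by simp

lemma edge_map_in:
  assumes "constructible_reeb G" "e \<in> edges G" "t \<in> {0..1}"
  shows "edge_map G e t \<in> reeb_space G"
  using assms by (auto simp: edge_map_def reeb_space_def constructible_reeb_def)

lemma topspace_reeb:
  assumes "constructible_reeb G"
  shows "topspace (reeb_top G) = reeb_space G"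
proof -
  have "openin (reeb_top G) (reeb_space G)"
    unfolding openin_reeb
  proof (intro conjI ballI)
    fix e assume e: "e \<in> edges G"
    have "{t \<in> {0..1}. edge_map G e t \<in> reeb_space G} = {0..1}"
      using edge_map_in[OF assms e] by blast
    then show "openin (top_of_set {0..1}) {t \<in> {0..1}. edge_map G e t \<in> reeb_space G}"
      by (simp only: openin_subtopology_refl) simp
  qed (rule order_refl)
  then have "reeb_space G \<subseteq> topspace (reeb_top G)" by (rule openin_subset)
  moreover have "openin (reeb_top G) (topspace (reeb_top G))" by (rule openin_topspace)
  then have "topspace (reeb_top G) \<subseteq> reeb_space G"
    unfolding openin_reeb by (rule conjunct1)
  ultimately show ?thesis by (rule subset_antisym[rotated])
qed

lemma edge_map_path:
  assumes "constructible_reeb G" "e \<in> edges G"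
  shows "pathin (reeb_top G) (edge_map G e)"
  unfolding pathin_def continuous_map_def
proof (intro conjI allI impI)
  show "edge_map G e \<in> topspace (top_of_set {0..1}) \<rightarrow> topspace (reeb_top G)"
    unfolding topspace_reeb[OF assms(1)] using edge_map_in[OF assms] by simp
  fix U assume U: "openin (reeb_top G) U"
  have "openin (top_of_set {0..1}) {t \<in> {0..1}. edge_map G e t \<in> U}"
    using U assms(2) unfolding openin_reeb by blast
  then show "openin (top_of_set {0..1}) {x \<in> topspace (top_of_set {0..1::real}). edge_map G e x \<in> U}" by simp
qed

lemma edge_map_comp:
  assumes "constructible_reeb G" "e \<in> edges G" "t \<in> {0..1}"
  shows "path_component_of (reeb_top G) (Inl (lo G e)) (edge_map G e t)"
proof -
  have "path_connectedin (reeb_top G) (edge_map G e ` {0..1})"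
    by (rule path_connectedin_path_image[OF edge_map_path[OF assms(1,2)]])
  moreover have "Inl (lo G e) = edge_map G e 0" by (simp add: edge_map_def)
  moreover have "edge_map G e 0 \<in> edge_map G e ` {0..1}" by auto
  moreover have "edge_map G e t \<in> edge_map G e ` {0..1}" using assms(3) by auto
  ultimately show ?thesis unfolding path_component_of by metis
qed

lemma comp_open:
  assumes "constructible_reeb G" 
  shows "openin (reeb_top G) (path_component_of_set (reeb_top G) x)"
  unfolding openin_reeb
proof (intro conjI ballI)
  show "path_component_of_set (reeb_top G) x \<subseteq> reeb_space G"
    using path_component_of_subset_topspace[of "reeb_top G" x] topspace_reeb[OF assms] by simp
  fix e assume e: "e \<in> edges G"
  let ?P = "path_component_of_set (reeb_top G) x"
  have eq: "edge_map G e t \<in> ?P \<longleftrightarrow> Inl (lo G e) \<in> ?P" if "t \<in> {0..1}" for t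
    using edge_map_comp[OF assms e that]
    by (meson mem_Collect_eq path_component_of_sym path_component_of_trans)
  show "openin (top_of_set {0..1}) {t \<in> {0..1}. edge_map G e t \<in> ?P}"
  proof (cases "Inl (lo G e) \<in> ?P")
    case True
    then have "{t \<in> {0..1}. edge_map G e t \<in> ?P} = topspace (top_of_set {0..1::real})" using eq by auto
    then show ?thesis by (metis openin_topspace)
  next
    case False
    then have "{t \<in> {0..1}. edge_map G e t \<in> ?P} = {}" using eq by auto
    then show ?thesis by (metis openin_empty)
  qed
qed

lemma finite_comps:
  assumes "constructible_reeb G"
  shows "finite (path_components_of (reeb_top G))"
proof -
  have "path_components_of (reeb_top G) \<subseteq> (\<lambda>v. path_component_of_set (reeb_top G) (Inl v)) ` verts G"
  proof
    fix C assume "C \<in> path_components_of (reeb_top G)"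
    then obtain x where x: "x \<in> reeb_space G" "C = path_component_of_set (reeb_top G) x"
      unfolding path_components_of_def topspace_reeb[OF assms] by auto
    show "C \<in> (\<lambda>v. path_component_of_set (reeb_top G) (Inl v)) ` verts G"
    proof (cases x)
      case (Inl v)
      then show ?thesis using x by (auto simp: reeb_space_def)
    next
      case (Inr p)
      then obtain e t where et: "x = Inr (e,t)" "e \<in> edges G" "t \<in> {0<..<1}"
        using x by (auto simp: reeb_space_def)
      then have "x = edge_map G e t" by (simp add: edge_map_def)
      then have "path_component_of (reeb_top G) (Inl (lo G e)) x"
        using edge_map_comp[OF assms et(2)] et(3) by auto
      then have "path_component_of (reeb_top G) (Inl (lo G e)) = path_component_of (reeb_top G) x"
        by (simp add: path_component_of_equiv)
      then have "C = path_component_of_set (reeb_top G) (Inl (lo G e))"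
        using x by simp
      moreover have "lo G e \<in> verts G" using assms et(2) by (simp add: constructible_reeb_def)
      ultimately show ?thesis by blast
    qed
  qed
  moreover have "finite (verts G)" using assms by (simp add: constructible_reeb_def)
  ultimately show ?thesis by (meson finite_surj)
qed



definition bnd :: "('v, 'e) rgraph \<Rightarrow> real" where
  "bnd G = (\<Sum>v\<in>verts G. \<bar>ht G v\<bar>)"

lemma fun_bound:
  assumes "constructible_reeb G" "x \<in> reeb_space G"
  shows "\<bar>reeb_fun G x\<bar> \<le> bnd G"
proof -
  have fin: "finite (verts G)" using assms by (simp add: constructible_reeb_def)
  have vb: "\<bar>ht G v\<bar> \<le> bnd G" if "v \<in> verts G" for v
    unfolding bnd_def using fin that by (auto intro: member_le_sum)
  show ?thesis
  proof (cases x)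
    case (Inl v)
    then show ?thesis using assms vb by (auto simp: reeb_space_def reeb_fun_def)
  next
    case (Inr p)
    then obtain e t where et: "x = Inr (e,t)" "e \<in> edges G" "0 < t" "t < 1"
      using assms by (auto simp: reeb_space_def)
    have a: "\<bar>ht G (lo G e)\<bar> \<le> bnd G" "\<bar>ht G (hi G e)\<bar> \<le> bnd G"
      using vb assms et by (auto simp: constructible_reeb_def)
    have "\<bar>(1 - t) * ht G (lo G e) + t * ht G (hi G e)\<bar> \<le> \<bar>(1 - t) * ht G (lo G e)\<bar> + \<bar>t * ht G (hi G e)\<bar>"
      by (rule abs_triangle_ineq)
    also have "\<dots> = (1-t) * \<bar>ht G (lo G e)\<bar> + t * \<bar>ht G (hi G e)\<bar>"
      using et by (simp add: abs_mult)
    also have "\<dots> \<le> (1-t) * bnd G + t * bnd G"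
      using et a by (intro add_mono mult_left_mono) auto
    finally show ?thesis using et by (simp add: reeb_fun_def algebra_simps)
  qed
qed

lemma dist_inf:
  assumes "\<not> path_component_of (reeb_top G) u v"
  shows "reeb_dist G u v = \<infinity>"
proof -
  have eq: "{p. pathin (reeb_top G) p \<and> p 0 = u \<and> p 1 = v} = {}"
    using assms by (auto simp: path_component_of_def)
  show ?thesis unfolding reeb_dist_def eq INF_empty by (simp only: top_ereal_def)
qed

lemma path_val:
  assumes "constructible_reeb G" "pathin (reeb_top G) p"
  shows "0 \<le> (SUP t \<in> {0..1}. reeb_fun G (p t)) - (INF t \<in> {0..1}. reeb_fun G (p t))
       \<and> (SUP t \<in> {0..1}. reeb_fun G (p t)) - (INF t \<in> {0..1}. reeb_fun G (p t)) \<le> 2 * bnd G"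
proof -
  have pt: "p t \<in> reeb_space G" if "t \<in> {0..1}" for t
    using assms that topspace_reeb[OF assms(1)] unfolding pathin_def continuous_map_def by auto
  let ?S = "(\<lambda>t. reeb_fun G (p t)) ` {0..1::real}"
  have b: "\<bar>s\<bar> \<le> bnd G" if "s \<in> ?S" for s using that pt fun_bound[OF assms(1)] by auto
  have ne: "?S \<noteq> {}" by auto
  have b1: "s \<le> bnd G" if "s \<in> ?S" for s using b[OF that] by (simp add: abs_le_iff)
  have b2: "- bnd G \<le> s" if "s \<in> ?S" for s using b[OF that] by (simp add: abs_le_iff)
  have ba: "bdd_above ?S" using b1 by (intro bdd_aboveI) 
  have bb: "bdd_below ?S" using b2 by (intro bdd_belowI)
  have m: "reeb_fun G (p 0) \<in> ?S" by auto
  have "Sup ?S \<ge> reeb_fun G (p 0)" using cSup_upper[OF m ba] .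
  moreover have "Inf ?S \<le> reeb_fun G (p 0)" using cInf_lower[OF m bb] .
  moreover have "Sup ?S \<le> bnd G" using b1 ne by (intro cSup_least) 
  moreover have "Inf ?S \<ge> - bnd G" using b2 ne by (intro cInf_greatest)
  ultimately show ?thesis by simp
qed

lemma dist_fin:
  assumes "constructible_reeb G" "path_component_of (reeb_top G) u v"
  shows "0 \<le> reeb_dist G u v \<and> reeb_dist G u v \<le> ereal (2 * bnd G)"
proof
  show "0 \<le> reeb_dist G u v" unfolding reeb_dist_def
    using path_val[OF assms(1)] by (intro INF_greatest) auto
  obtain p where p: "pathin (reeb_top G) p" "p 0 = u" "p 1 = v"
    using assms(2) by (auto simp: path_component_of_def)
  show "reeb_dist G u v \<le> ereal (2 * bnd G)" unfolding reeb_dist_def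
    using p path_val[OF assms(1) p(1)] by (intro INF_lower2[of p]) auto
qed

lemma ediff_bound:
  assumes "0 \<le> a" "a \<le> ereal A" "0 \<le> b" "b \<le> ereal B"
  shows "ediff a b / 2 \<le> ereal (A + B)"
proof -
  obtain r where r: "a = ereal r" using assms(1,2) by (cases a) auto
  obtain s where s: "b = ereal s" using assms(3,4) by (cases b) auto
  have rr: "0 \<le> r" "r \<le> A" using assms(1,2) r by auto
  have ss: "0 \<le> s" "s \<le> B" using assms(3,4) s by auto
  show ?thesis
  proof (cases "r = s")
    case True
    then have "ediff a b = 0" using r s by (simp add: ediff_def)
    then show ?thesis using rr ss by simp
  next
    case False
    then have "ediff a b = ereal \<bar>r - s\<bar>" using r s by (simp add: ediff_def)
    moreover have "\<bar>r - s\<bar> / 2 \<le> A + B" using rr ss by (auto simp: abs_real_def)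
    ultimately show ?thesis by simp
  qed
qed

lemma ediff_inf_aux:
  assumes "ediff a b / 2 < \<infinity>" "a = \<infinity>" "0 \<le> b"
  shows "b = \<infinity>"
proof (rule ccontr)
  assume "b \<noteq> \<infinity>"
  then obtain s where s: "b = ereal s" using assms(3) by (cases b) auto
  then have "ediff a b = \<infinity>" using assms(2) by (simp add: ediff_def)
  then show False using assms(1) by simp
qed

lemma ediff_sym: "ediff a b = ediff b a"
proof -
  have "\<bar>a - b\<bar> = \<bar>b - a\<bar>" by (metis abs_ereal_uminus ereal_minus_diff_eq)
  then show ?thesis unfolding ediff_def by auto
qed

lemma ediff_inf:
  assumes "ediff a b / 2 < \<infinity>" "0 \<le> a" "0 \<le> b"
  shows "a = \<infinity> \<longleftrightarrow> b = \<infinity>"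
  using ediff_inf_aux[OF assms(1) _ assms(3)] ediff_inf_aux[of b a] assms ediff_sym by metis

lemma pc_iff:
  assumes "a \<in> topspace X" "a' \<in> topspace X"
  shows "path_component_of X a a' \<longleftrightarrow> path_component_of_set X a = path_component_of_set X a'"
proof
  assume "path_component_of X a a'"
  then have "path_component_of X a = path_component_of X a'" by (simp add: path_component_of_equiv)
  then show "path_component_of_set X a = path_component_of_set X a'" by simp
next
  assume e: "path_component_of_set X a = path_component_of_set X a'"
  have "a' \<in> path_component_of_set X a'" using assms(2) by (simp add: path_component_of_refl)
  then have "a' \<in> path_component_of_set X a" by (simp only: e)
  then show "path_component_of X a a'" by simp
qed

lemma comp_eq:
  assumes "C \<in> path_components_of X" "y \<in> C"
  shows "path_component_of_set X y = C"
proof -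
  obtain z where z: "z \<in> topspace X" "C = path_component_of_set X z"
    using assms(1) unfolding path_components_of_def by auto
  then have "path_component_of X z y" using assms(2) by simp
  then have "path_component_of X z = path_component_of X y" by (simp add: path_component_of_equiv)
  then show ?thesis using z by simp
qed

lemma card_le:
  assumes "\<And>x. x \<in> topspace X \<Longrightarrow> f x \<in> topspace Y"
    and "\<And>x x'. x \<in> topspace X \<Longrightarrow> x' \<in> topspace X \<Longrightarrow> path_component_of Y (f x) (f x') \<Longrightarrow> path_component_of X x x'"
    and "finite (path_components_of Y)"
  shows "card (path_components_of X) \<le> card (path_components_of Y)"
proof -
  define h where "h C = path_component_of_set Y (f (SOME x. x \<in> C))" for C
  have sm: "(SOME x. x \<in> C) \<in> C" if "C \<in> path_components_of X" for C
    using nonempty_path_components_of[OF that] by (simp add: some_in_eq)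
  have st: "(SOME x. x \<in> C) \<in> topspace X" if "C \<in> path_components_of X" for C
    using sm[OF that] path_components_of_subset[OF that] by auto
  have "h ` path_components_of X \<subseteq> path_components_of Y"
    using st assms(1) unfolding h_def by (auto simp: path_component_in_path_components_of)
  moreover have "inj_on h (path_components_of X)"
  proof
    fix C C' assume C: "C \<in> path_components_of X" and C': "C' \<in> path_components_of X" and e: "h C = h C'"
    let ?x = "SOME x. x \<in> C" and ?x' = "SOME x. x \<in> C'"
    have "path_component_of_set Y (f ?x) = path_component_of_set Y (f ?x')"
      using e unfolding h_def .
    then have "path_component_of Y (f ?x) (f ?x')"
      by (rule pc_iff[THEN iffD2, OF assms(1)[OF st[OF C]] assms(1)[OF st[OF C']]])
    then have "path_component_of X ?x ?x'" by (rule assms(2)[OF st[OF C] st[OF C']])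
    then have "path_component_of_set X ?x = path_component_of_set X ?x'"
      by (rule pc_iff[THEN iffD1, OF st[OF C] st[OF C']])
    then show "C = C'"
      using comp_eq[OF C sm[OF C]] comp_eq[OF C' sm[OF C']] by simp
  qed
  ultimately show ?thesis by (intro card_inj_on_le[OF _ _ assms(3)])
qed

lemma cont_lc:
  assumes "\<And>x. openin X (path_component_of_set X x)"
    and "\<And>x. x \<in> topspace X \<Longrightarrow> f x \<in> topspace Y"
    and "\<And>x x'. path_component_of X x x' \<Longrightarrow> f x' = f x"
  shows "continuous_map X Y f"
  unfolding continuous_map_def
proof (intro conjI allI impI)
  show "f \<in> topspace X \<rightarrow> topspace Y" using assms(2) by auto
  fix V assume "openin Y V"
  show "openin X {x \<in> topspace X. f x \<in> V}"
  proof (subst openin_subopen, intro ballI)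
    fix x assume x: "x \<in> {x \<in> topspace X. f x \<in> V}"
    show "\<exists>T. openin X T \<and> x \<in> T \<and> T \<subseteq> {x \<in> topspace X. f x \<in> V}"
    proof (intro exI conjI)
      show "openin X (path_component_of_set X x)" by (rule assms(1))
      show "x \<in> path_component_of_set X x" using x by (simp add: path_component_of_refl)
      show "path_component_of_set X x \<subseteq> {x \<in> topspace X. f x \<in> V}"
      proof
        fix y assume y: "y \<in> path_component_of_set X x"
        then have "path_component_of X x y" by simp
        then show "y \<in> {x \<in> topspace X. f x \<in> V}"
          using x assms(3)[of x y] path_component_in_topspace[of X x y] by simp
      qed
    qed
  qed
qed



lemma partA:
  assumes G: "constructible_reeb G" and H: "constructible_reeb H"
    and fd: "fd_dist G H \<noteq> \<infinity>"
  shows "card (path_components_of (reeb_top G)) = card (path_components_of (reeb_top H))"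
proof -
  let ?X = "reeb_top G" and ?Y = "reeb_top H"
  have "fd_dist G H < \<infinity>" using fd by (simp add: less_top)
  then obtain \<Phi> \<Psi> where cP: "continuous_map ?X ?Y \<Phi>" and cQ: "continuous_map ?Y ?X \<Psi>"
    and lt: "max (distortion G H \<Phi> \<Psi>)
          (max (SUP x \<in> topspace ?X. ereal \<bar>reeb_fun G x - reeb_fun H (\<Phi> x)\<bar>)
               (SUP y \<in> topspace ?Y. ereal \<bar>reeb_fun G (\<Psi> y) - reeb_fun H y\<bar>)) < \<infinity>"
    unfolding fd_dist_def INF_less_iff by auto
  have dl: "distortion G H \<Phi> \<Psi> < \<infinity>" by (rule le_less_trans[OF max.cobounded1 lt])
  define C where "C = {(x, \<Phi> x) | x. x \<in> topspace ?X} \<union> {(\<Psi> y, y) | y. y \<in> topspace ?Y}"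
  have tm: "ediff (reeb_dist G (fst p) (fst q)) (reeb_dist H (snd p) (snd q)) / 2 < \<infinity>"
    if "p \<in> C" "q \<in> C" for p q
  proof -
    have "ediff (reeb_dist G (fst p) (fst q)) (reeb_dist H (snd p) (snd q)) / 2 \<le> distortion G H \<Phi> \<Psi>"
      unfolding distortion_def Let_def C_def[symmetric]
      using that by (intro SUP_upper2[of "(p,q)"]) auto
    then show ?thesis using dl by (rule le_less_trans)
  qed
  have PX: "\<Phi> x \<in> topspace ?Y" if "x \<in> topspace ?X" for x
    using cP that by (auto simp: continuous_map_def)
  have QY: "\<Psi> y \<in> topspace ?X" if "y \<in> topspace ?Y" for y
    using cQ that by (auto simp: continuous_map_def)
  have key: "path_component_of ?X (fst p) (fst q) \<longleftrightarrow> path_component_of ?Y (snd p) (snd q)"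
    if "p \<in> C" "q \<in> C" for p q
  proof -
    have a: "0 \<le> reeb_dist G (fst p) (fst q)"
      by (cases "path_component_of ?X (fst p) (fst q)") (simp_all add: dist_fin[OF G] dist_inf)
    have b: "0 \<le> reeb_dist H (snd p) (snd q)"
      by (cases "path_component_of ?Y (snd p) (snd q)") (simp_all add: dist_fin[OF H] dist_inf)
    have e: "reeb_dist G (fst p) (fst q) = \<infinity> \<longleftrightarrow> reeb_dist H (snd p) (snd q) = \<infinity>"
      by (rule ediff_inf[OF tm[OF that] a b])
    have fa: "reeb_dist G u v \<noteq> \<infinity>" if "path_component_of ?X u v" for u v
      using dist_fin[OF G that] by auto
    have fb: "reeb_dist H u v \<noteq> \<infinity>" if "path_component_of ?Y u v" for u v
      using dist_fin[OF H that] by auto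
    show ?thesis
    proof
      assume "path_component_of ?X (fst p) (fst q)"
      then have "reeb_dist H (snd p) (snd q) \<noteq> \<infinity>" using fa e by blast
      then show "path_component_of ?Y (snd p) (snd q)" using dist_inf by blast
    next
      assume "path_component_of ?Y (snd p) (snd q)"
      then have "reeb_dist G (fst p) (fst q) \<noteq> \<infinity>" using fb e by blast
      then show "path_component_of ?X (fst p) (fst q)" using dist_inf by blast
    qed
  qed
  have "card (path_components_of ?X) \<le> card (path_components_of ?Y)"
  proof (rule card_le[where f=\<Phi>])
    show "\<And>x. x \<in> topspace ?X \<Longrightarrow> \<Phi> x \<in> topspace ?Y" by (rule PX)
    show "path_component_of ?X x x'" if "x \<in> topspace ?X" "x' \<in> topspace ?X" "path_component_of ?Y (\<Phi> x) (\<Phi> x')" for x x'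
      using key[of "(x, \<Phi> x)" "(x', \<Phi> x')"] that unfolding C_def by auto
  qed (rule finite_comps[OF H])
  moreover have "card (path_components_of ?Y) \<le> card (path_components_of ?X)"
  proof (rule card_le[where f=\<Psi>])
    show "\<And>x. x \<in> topspace ?Y \<Longrightarrow> \<Psi> x \<in> topspace ?X" by (rule QY)
    show "path_component_of ?Y x x'" if "x \<in> topspace ?Y" "x' \<in> topspace ?Y" "path_component_of ?X (\<Psi> x) (\<Psi> x')" for x x'
      using key[of "(\<Psi> x, x)" "(\<Psi> x', x')"] that unfolding C_def by auto
  qed (rule finite_comps[OF G])
  ultimately show ?thesis by simp
qed



lemma bnd_nonneg: "0 \<le> bnd G"
  unfolding bnd_def by (simp add: sum_nonneg)

lemma partB:
  assumes G: "constructible_reeb G" and H: "constructible_reeb H"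
    and eq: "card (path_components_of (reeb_top G)) = card (path_components_of (reeb_top H))"
  shows "fd_dist G H \<noteq> \<infinity>"
proof -
  let ?X = "reeb_top G" and ?Y = "reeb_top H"
  let ?A = "path_components_of ?X" and ?B = "path_components_of ?Y"
  obtain \<sigma> where bij: "bij_betw \<sigma> ?A ?B"
    using finite_same_card_bij[OF finite_comps[OF G] finite_comps[OF H] eq] by blast
  define \<Phi> where "\<Phi> x = (SOME y. y \<in> \<sigma> (path_component_of_set ?X x))" for x
  define \<Psi> where "\<Psi> y = (SOME x. x \<in> inv_into ?A \<sigma> (path_component_of_set ?Y y))" for y
  have bij': "bij_betw (inv_into ?A \<sigma>) ?B ?A" by (rule bij_betw_inv_into[OF bij])
  have ptA: "(SOME x. x \<in> C) \<in> C" if "C \<in> ?A" for C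
    using nonempty_path_components_of[OF that] by (simp add: some_in_eq)
  have ptB: "(SOME x. x \<in> C) \<in> C" if "C \<in> ?B" for C
    using nonempty_path_components_of[OF that] by (simp add: some_in_eq)
  have P1: "\<Phi> x \<in> topspace ?Y \<and> path_component_of_set ?Y (\<Phi> x) = \<sigma> (path_component_of_set ?X x)"
    if "x \<in> topspace ?X" for x
  proof -
    have "path_component_of_set ?X x \<in> ?A" using that by (simp add: path_component_in_path_components_of)
    then have S: "\<sigma> (path_component_of_set ?X x) \<in> ?B" using bij_betw_apply[OF bij] by blast
    then have "\<Phi> x \<in> \<sigma> (path_component_of_set ?X x)" unfolding \<Phi>_def using ptB by blast
    then show ?thesis using subsetD[OF path_components_of_subset[OF S]] comp_eq[OF S] by simp
  qed
  have Q1: "\<Psi> y \<in> topspace ?X \<and> \<sigma> (path_component_of_set ?X (\<Psi> y)) = path_component_of_set ?Y y"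
    if "y \<in> topspace ?Y" for y
  proof -
    have b: "path_component_of_set ?Y y \<in> ?B" using that by (simp add: path_component_in_path_components_of)
    then have S: "inv_into ?A \<sigma> (path_component_of_set ?Y y) \<in> ?A" using bij_betw_apply[OF bij'] by blast
    then have "\<Psi> y \<in> inv_into ?A \<sigma> (path_component_of_set ?Y y)" unfolding \<Psi>_def using ptA by blast
    then have "\<Psi> y \<in> topspace ?X \<and> path_component_of_set ?X (\<Psi> y) = inv_into ?A \<sigma> (path_component_of_set ?Y y)"
      using subsetD[OF path_components_of_subset[OF S]] comp_eq[OF S] by simp
    moreover have "\<sigma> (inv_into ?A \<sigma> (path_component_of_set ?Y y)) = path_component_of_set ?Y y"
      using b bij by (simp add: bij_betw_def f_inv_into_f)
    ultimately show ?thesis by simp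
  qed
  have cP: "continuous_map ?X ?Y \<Phi>"
  proof (rule cont_lc)
    show "openin ?X (path_component_of_set ?X x)" for x by (rule comp_open[OF G])
    show "\<Phi> x \<in> topspace ?Y" if "x \<in> topspace ?X" for x using P1[OF that] by blast
    show "\<Phi> x' = \<Phi> x" if "path_component_of ?X x x'" for x x'
    proof -
      have "path_component_of ?X x = path_component_of ?X x'" using that by (simp add: path_component_of_equiv)
      then show ?thesis unfolding \<Phi>_def by simp
    qed
  qed
  have cQ: "continuous_map ?Y ?X \<Psi>"
  proof (rule cont_lc)
    show "openin ?Y (path_component_of_set ?Y x)" for x by (rule comp_open[OF H])
    show "\<Psi> x \<in> topspace ?X" if "x \<in> topspace ?Y" for x using Q1[OF that] by blast
    show "\<Psi> x' = \<Psi> x" if "path_component_of ?Y x x'" for x x'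
    proof -
      have "path_component_of ?Y x = path_component_of ?Y x'" using that by (simp add: path_component_of_equiv)
      then show ?thesis unfolding \<Psi>_def by simp
    qed
  qed
  define C where "C = {(x, \<Phi> x) | x. x \<in> topspace ?X} \<union> {(\<Psi> y, y) | y. y \<in> topspace ?Y}"
  have Cp: "fst p \<in> topspace ?X \<and> snd p \<in> topspace ?Y \<and> \<sigma> (path_component_of_set ?X (fst p)) = path_component_of_set ?Y (snd p)"
    if "p \<in> C" for p
    using that unfolding C_def
  proof (elim UnE)
    assume "p \<in> {(x, \<Phi> x) | x. x \<in> topspace ?X}"
    then obtain x where "p = (x, \<Phi> x)" "x \<in> topspace ?X" by blast
    then show ?thesis using P1[of x] by simp
  next
    assume "p \<in> {(\<Psi> y, y) | y. y \<in> topspace ?Y}"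
    then obtain y where "p = (\<Psi> y, y)" "y \<in> topspace ?Y" by blast
    then show ?thesis using Q1[of y] by simp
  qed
  have key: "path_component_of ?X (fst p) (fst q) \<longleftrightarrow> path_component_of ?Y (snd p) (snd q)"
    if "p \<in> C" "q \<in> C" for p q
  proof -
    have inA: "path_component_of_set ?X (fst p) \<in> ?A" "path_component_of_set ?X (fst q) \<in> ?A"
      using Cp that by (auto simp: path_component_in_path_components_of)
    have "path_component_of ?X (fst p) (fst q) \<longleftrightarrow> path_component_of_set ?X (fst p) = path_component_of_set ?X (fst q)"
      using Cp that by (intro pc_iff) auto
    also have "\<dots> \<longleftrightarrow> \<sigma> (path_component_of_set ?X (fst p)) = \<sigma> (path_component_of_set ?X (fst q))"
      using inj_on_eq_iff[OF bij_betw_imp_inj_on[OF bij] inA] by simp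
    also have "\<dots> \<longleftrightarrow> path_component_of_set ?Y (snd p) = path_component_of_set ?Y (snd q)"
      using Cp that by simp
    also have "\<dots> \<longleftrightarrow> path_component_of ?Y (snd p) (snd q)"
      using Cp that by (intro pc_iff[symmetric]) auto
    finally show ?thesis .
  qed
  define K where "K = 2 * bnd G + 2 * bnd H"
  have Kp: "0 \<le> K" unfolding K_def using bnd_nonneg[of G] bnd_nonneg[of H] by simp
  have D: "distortion G H \<Phi> \<Psi> \<le> ereal K"
    unfolding distortion_def Let_def C_def[symmetric]
  proof (rule SUP_least)
    fix z assume z: "z \<in> C \<times> C"
    then obtain p q where pq: "z = (p,q)" "p \<in> C" "q \<in> C" by auto
    show "(case z of (p, q) \<Rightarrow> ediff (reeb_dist G (fst p) (fst q)) (reeb_dist H (snd p) (snd q)) / 2) \<le> ereal K"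
    proof (cases "path_component_of ?X (fst p) (fst q)")
      case True
      then have T2: "path_component_of ?Y (snd p) (snd q)" using key pq by blast
      have "ediff (reeb_dist G (fst p) (fst q)) (reeb_dist H (snd p) (snd q)) / 2 \<le> ereal (2 * bnd G + 2 * bnd H)"
        using dist_fin[OF G True] dist_fin[OF H T2] by (intro ediff_bound) auto
      then show ?thesis using pq unfolding K_def by simp
    next
      case False
      then have F2: "\<not> path_component_of ?Y (snd p) (snd q)" using key pq by blast
      have "ediff (reeb_dist G (fst p) (fst q)) (reeb_dist H (snd p) (snd q)) = 0"
        using dist_inf[OF False] dist_inf[OF F2] by (simp add: ediff_def)
      then show ?thesis using pq Kp by simp
    qed
  qed
  have F1: "(SUP x \<in> topspace ?X. ereal \<bar>reeb_fun G x - reeb_fun H (\<Phi> x)\<bar>) \<le> ereal K"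
  proof (rule SUP_least)
    fix x assume x: "x \<in> topspace ?X"
    have "\<bar>reeb_fun G x\<bar> \<le> bnd G" using fun_bound[OF G] x topspace_reeb[OF G] by blast
    moreover have "\<bar>reeb_fun H (\<Phi> x)\<bar> \<le> bnd H" using fun_bound[OF H] P1[OF x] topspace_reeb[OF H] by blast
    ultimately have "\<bar>reeb_fun G x - reeb_fun H (\<Phi> x)\<bar> \<le> K"
      unfolding K_def using bnd_nonneg[of G] bnd_nonneg[of H] by linarith
    then show "ereal \<bar>reeb_fun G x - reeb_fun H (\<Phi> x)\<bar> \<le> ereal K" by simp
  qed
  have F2: "(SUP y \<in> topspace ?Y. ereal \<bar>reeb_fun G (\<Psi> y) - reeb_fun H y\<bar>) \<le> ereal K"
  proof (rule SUP_least)
    fix y assume y: "y \<in> topspace ?Y"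
    have "\<bar>reeb_fun H y\<bar> \<le> bnd H" using fun_bound[OF H] y topspace_reeb[OF H] by blast
    moreover have "\<bar>reeb_fun G (\<Psi> y)\<bar> \<le> bnd G" using fun_bound[OF G] Q1[OF y] topspace_reeb[OF G] by blast
    ultimately have "\<bar>reeb_fun G (\<Psi> y) - reeb_fun H y\<bar> \<le> K"
      unfolding K_def using bnd_nonneg[of G] bnd_nonneg[of H] by linarith
    then show "ereal \<bar>reeb_fun G (\<Psi> y) - reeb_fun H y\<bar> \<le> ereal K" by simp
  qed
  have "fd_dist G H \<le> max (distortion G H \<Phi> \<Psi>)
          (max (SUP x \<in> topspace ?X. ereal \<bar>reeb_fun G x - reeb_fun H (\<Phi> x)\<bar>)
               (SUP y \<in> topspace ?Y. ereal \<bar>reeb_fun G (\<Psi> y) - reeb_fun H y\<bar>))"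
    unfolding fd_dist_def using cP cQ by (intro INF_lower2[of "(\<Phi>, \<Psi>)"]) auto
  also have "\<dots> \<le> ereal K" using D F1 F2 by simp
  finally show ?thesis by auto
qed


theorem mainTheorem14:
  fixes G :: "('v, 'e) rgraph" and H :: "('w, 'd) rgraph"
  assumes "constructible_reeb G" and "constructible_reeb H"
  shows "fd_dist G H = \<infinity> \<longleftrightarrow>
         card (path_components_of (reeb_top G)) \<noteq> card (path_components_of (reeb_top H))"
proof
  assume "fd_dist G H = \<infinity>"
  then show "card (path_components_of (reeb_top G)) \<noteq> card (path_components_of (reeb_top H))"
    using partB[OF assms] by blast
next
  assume "card (path_components_of (reeb_top G)) \<noteq> card (path_components_of (reeb_top H))"
  then show "fd_dist G H = \<infinity>" using partA[OF assms] by blast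
qed

end
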